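(* For $n\ge 1$, the number of shallow $231$-avoiding centrosymmetric permutations in $S_n$ equals $2^{\lfloor n/2\rfloor}$ (in fact every $231$-avoiding centrosymmetric permutation is shallow).
   Context: For $\pi\in S_n$: $D(\pi)=\sum_{i}|\pi_i-i|$, $I(\pi)$ is the number of inversions, $T(\pi)=n-\mathrm{cyc}(\pi)$ with $\mathrm{cyc}$ the number of cycles in the disjoint cycle decomposition; $\pi$ is shallow if $I(\pi)+T(\pi)=D(\pi)$. A permutation avoids a pattern $\sigma$ if it has no subsequence order-isomorphic to $\sigma$. The reverse-complement $\pi^{rc}$ is defined by $\pi^{rc}_{n+1-i}=n+1-\pi_i$; $\pi$ is centrosymmetric if $\pi=\pi^{rc}$. *)

theory Defs
  imports "HOL-Combinatorics.Permutations"
begin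

text \<open>Permutations of S_n are represented as functions p with p permutes {1..n}.\<close>

definition displacement :: "nat \<Rightarrow> (nat \<Rightarrow> nat) \<Rightarrow> int" where
  "displacement n p = (\<Sum>i\<in>{1..n}. \<bar>int (p i) - int i\<bar>)"

definition inversions :: "nat \<Rightarrow> (nat \<Rightarrow> nat) \<Rightarrow> nat" where
  "inversions n p = card {(i, j). i \<in> {1..n} \<and> j \<in> {1..n} \<and> i < j \<and> p j < p i}"

definition cycle_of :: "(nat \<Rightarrow> nat) \<Rightarrow> nat \<Rightarrow> nat set" where
  "cycle_of p i = {j. \<exists>k. (p ^^ k) i = j}"

definition num_cycles :: "nat \<Rightarrow> (nat \<Rightarrow> nat) \<Rightarrow> nat" where
  "num_cycles n p = card (cycle_of p ` {1..n})"

definition reflection_len :: "nat \<Rightarrow> (nat \<Rightarrow> nat) \<Rightarrow> nat" where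
  "reflection_len n p = n - num_cycles n p"

definition shallow :: "nat \<Rightarrow> (nat \<Rightarrow> nat) \<Rightarrow> bool" where
  "shallow n p \<longleftrightarrow> int (inversions n p) + int (reflection_len n p) = displacement n p"

definition avoids_231 :: "nat \<Rightarrow> (nat \<Rightarrow> nat) \<Rightarrow> bool" where
  "avoids_231 n p \<longleftrightarrow> \<not> (\<exists>i j k. 1 \<le> i \<and> i < j \<and> j < k \<and> k \<le> n \<and> p k < p i \<and> p i < p j)"

definition centrosymmetric :: "nat \<Rightarrow> (nat \<Rightarrow> nat) \<Rightarrow> bool" where
  "centrosymmetric n p \<longleftrightarrow> (\<forall>i\<in>{1..n}. p (n + 1 - i) = n + 1 - p i)"

end

theory Submission
  imports Defs
begin


definition rv :: "nat \<Rightarrow> nat \<Rightarrow> nat \<Rightarrow> nat" where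
  "rv a b i = (if a \<le> i \<and> i < b then a + b - 1 - i else i)"

definition av231 :: "nat \<Rightarrow> nat \<Rightarrow> (nat \<Rightarrow> nat) \<Rightarrow> bool" where
  "av231 a b p \<longleftrightarrow> \<not> (\<exists>i j k. a \<le> i \<and> i < j \<and> j < k \<and> k < b \<and> p k < p i \<and> p i < p j)"

definition av312 :: "nat \<Rightarrow> nat \<Rightarrow> (nat \<Rightarrow> nat) \<Rightarrow> bool" where
  "av312 a b p \<longleftrightarrow> \<not> (\<exists>i j k. a \<le> i \<and> i < j \<and> j < k \<and> k < b \<and> p j < p k \<and> p k < p i)"

definition lay :: "nat \<Rightarrow> nat \<Rightarrow> (nat \<Rightarrow> nat) \<Rightarrow> bool" where
  "lay a b p \<longleftrightarrow> p permutes {a..<b} \<and> av231 a b p \<and> av312 a b p"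

lemma rv_permutes: "rv a b permutes {a..<b}"
  by (rule inj_imp_permutes) (auto simp: rv_def inj_on_def)

lemma av231_cong: "(\<And>i. a \<le> i \<Longrightarrow> i < b \<Longrightarrow> p i = q i) \<Longrightarrow> av231 a b p = av231 a b q"
  unfolding av231_def by (intro arg_cong[where f=Not] ex_cong1) (auto simp: less_imp_le_nat)

lemma av312_cong: "(\<And>i. a \<le> i \<Longrightarrow> i < b \<Longrightarrow> p i = q i) \<Longrightarrow> av312 a b p = av312 a b q"
  unfolding av312_def by (intro arg_cong[where f=Not] ex_cong1) (auto simp: less_imp_le_nat)

lemma av231_sub: "av231 a b p \<Longrightarrow> a \<le> a' \<Longrightarrow> b' \<le> b \<Longrightarrow> av231 a' b' p"
  unfolding av231_def by (blast intro: le_trans less_le_trans)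

lemma av312_sub: "av312 a b p \<Longrightarrow> a \<le> a' \<Longrightarrow> b' \<le> b \<Longrightarrow> av312 a' b' p"
  unfolding av312_def by (blast intro: le_trans less_le_trans)

lemma av_decr:
  assumes "\<And>i j. a \<le> i \<Longrightarrow> i < j \<Longrightarrow> j < b \<Longrightarrow> p j < p i"
  shows "av231 a b p" "av312 a b p"
  unfolding av231_def av312_def using assms
  by (meson less_asym less_trans order.strict_trans1 less_imp_le_nat)+

lemma rv_decr: "a \<le> i \<Longrightarrow> i < j \<Longrightarrow> j < b \<Longrightarrow> rv a b j < rv a b i"
  by (simp add: rv_def)

lemma av_sum:
  assumes "a \<le> m" "m \<le> b"
    and lt: "\<And>i j. a \<le> i \<Longrightarrow> i < m \<Longrightarrow> m \<le> j \<Longrightarrow> j < b \<Longrightarrow> p i < p j"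
  shows "av231 a m p \<Longrightarrow> av231 m b p \<Longrightarrow> av231 a b p"
    and "av312 a m p \<Longrightarrow> av312 m b p \<Longrightarrow> av312 a b p"
proof -
  assume h1: "av231 a m p" and h2: "av231 m b p"
  show "av231 a b p" unfolding av231_def
  proof
    assume "\<exists>i j k. a \<le> i \<and> i < j \<and> j < k \<and> k < b \<and> p k < p i \<and> p i < p j"
    then obtain i j k where ijk: "a \<le> i" "i < j" "j < k" "k < b" "p k < p i" "p i < p j" by blast
    consider "k < m" | "m \<le> i" | "i < m \<and> m \<le> k" by linarith
    then show False
    proof cases
      case 1 then show ?thesis using h1 ijk unfolding av231_def by blast
    next
      case 2 then show ?thesis using h2 ijk unfolding av231_def by blast
    next
      case 3 then show ?thesis using lt[of i k] ijk by auto
    qed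
  qed
next
  assume h1: "av312 a m p" and h2: "av312 m b p"
  show "av312 a b p" unfolding av312_def
  proof
    assume "\<exists>i j k. a \<le> i \<and> i < j \<and> j < k \<and> k < b \<and> p j < p k \<and> p k < p i"
    then obtain i j k where ijk: "a \<le> i" "i < j" "j < k" "k < b" "p j < p k" "p k < p i" by blast
    consider "k < m" | "m \<le> i" | "i < m \<and> m \<le> k" by linarith
    then show False
    proof cases
      case 1 then show ?thesis using h1 ijk unfolding av312_def by blast
    next
      case 2 then show ?thesis using h2 ijk unfolding av312_def by blast
    next
      case 3 then show ?thesis using lt[of i k] ijk by auto
    qed
  qed
qed

lemma rv_lay: "lay a b (rv a b)"
  unfolding lay_def using rv_permutes av_decr[of a b "rv a b", OF rv_decr] by auto



lemma card_below:
  assumes perm: "p permutes {a..<b}" and c: "a \<le> c" "c \<le> b"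
  shows "card {i\<in>{a..<b}. p i < c} = c - a"
proof -
  have inr: "\<And>i. i \<in> {a..<b} \<Longrightarrow> p i \<in> {a..<b}" using permutes_in_image[OF perm] by blast
  have img: "p ` {a..<b} = {a..<b}" using permutes_image[OF perm] .
  have "p ` {i\<in>{a..<b}. p i < c} = {a..<c}"
  proof
    show "p ` {i\<in>{a..<b}. p i < c} \<subseteq> {a..<c}"
      using inr by force
  next
    show "{a..<c} \<subseteq> p ` {i\<in>{a..<b}. p i < c}"
    proof
      fix y assume y: "y \<in> {a..<c}"
      then have "y \<in> p ` {a..<b}" using img c by simp
      then obtain x where "x \<in> {a..<b}" "y = p x" by blast
      then show "y \<in> p ` {i\<in>{a..<b}. p i < c}" using y by auto
    qed
  qed
  moreover have "inj_on p {i\<in>{a..<b}. p i < c}"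
    using permutes_inj_on[OF perm] .
  ultimately show ?thesis using card_image[of p "{i\<in>{a..<b}. p i < c}"] by simp
qed



lemma struct1:
  assumes L: "lay a b p" and ab: "a < b"
  shows "a < Suc (p a)" "Suc (p a) \<le> b" "\<And>i. a \<le> i \<Longrightarrow> i < Suc (p a) \<Longrightarrow> p i = a + Suc (p a) - 1 - i"
proof -
  have perm: "p permutes {a..<b}" and A1: "av231 a b p" and A2: "av312 a b p"
    using L by (auto simp: lay_def)
  define v where "v = p a"
  have inj: "\<And>x y. p x = p y \<Longrightarrow> x = y" using permutes_inj[OF perm] by (auto dest: injD)
  have inr: "\<And>i. i \<in> {a..<b} \<Longrightarrow> p i \<in> {a..<b}" using permutes_in_image[OF perm] by auto
  have v: "a \<le> v" "v < b" using inr[of a] ab by (auto simp: v_def)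
  then show "a < Suc (p a)" "Suc (p a) \<le> b" by (auto simp: v_def)
  define P where "P = {i\<in>{a..<b}. p i < v}"
  have cP: "card P = v - a" unfolding P_def using card_below[OF perm, of v] v by auto
  have aP: "a \<notin> P" by (auto simp: P_def v_def)
  have fP: "finite P" by (auto simp: P_def)
  have c1: "i < j" if "i \<in> P" "a < j" "j < b" "j \<notin> P" for i j
  proof (rule ccontr)
    assume "\<not> i < j"
    moreover have "i \<noteq> j" using that by auto
    ultimately have ji: "j < i" by auto
    have "p j \<noteq> v" using inj[of j a] that by (auto simp: v_def)
    then have "v < p j" using that by (auto simp: P_def)
    moreover have "p i < v" using that by (auto simp: P_def)
    moreover have "i < b" using that by (auto simp: P_def)
    ultimately have "a \<le> a \<and> a < j \<and> j < i \<and> i < b \<and> p i < p a \<and> p a < p j"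
      using ji that by (auto simp: v_def)
    then show False using A1 unfolding av231_def by blast
  qed
  have c2: "p j < p i" if "i \<in> P" "j \<in> P" "i < j" for i j
  proof (rule ccontr)
    assume "\<not> p j < p i"
    moreover have "p i \<noteq> p j" using inj[of i j] that by auto
    ultimately have "p i < p j" by auto
    moreover have "p j < p a" using that by (auto simp: P_def v_def)
    moreover have "a < i" using that aP by (auto simp: P_def order_le_less)
    moreover have "j < b" using that by (auto simp: P_def)
    ultimately have "a \<le> a \<and> a < i \<and> i < j \<and> j < b \<and> p i < p j \<and> p j < p a"
      using that by auto
    then show False using A2 unfolding av312_def by blast
  qed
  have c3: "i \<in> P \<longleftrightarrow> a < i \<and> i \<le> v" for i
  proof
    assume iP: "i \<in> P"
    then have ai: "a < i" using aP by (auto simp: P_def order_le_less)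
    have "{a<..i} \<subseteq> P"
    proof
      fix j assume j: "j \<in> {a<..i}"
      have "j < b" using j iP by (auto simp: P_def)
      show "j \<in> P"
      proof (rule ccontr)
        assume "j \<notin> P"
        then have "i < j" using c1[OF iP] j \<open>j < b\<close> by auto
        then show False using j by auto
      qed
    qed
    then have "card {a<..i} \<le> card P" using fP by (rule card_mono[rotated])
    then show "a < i \<and> i \<le> v" using cP ai v by auto
  next
    assume h: "a < i \<and> i \<le> v"
    show "i \<in> P"
    proof (rule ccontr)
      assume niP: "i \<notin> P"
      have "P \<subseteq> {a<..<i}"
      proof
        fix j assume jP: "j \<in> P"
        then have "j < i" using c1[OF jP, of i] h v niP by auto
        moreover have "a < j" using jP aP by (auto simp: P_def order_le_less)
        ultimately show "j \<in> {a<..<i}" by auto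
      qed
      then have "card P \<le> card {a<..<i}" by (rule card_mono[rotated]) auto
      then show False using cP h by auto
    qed
  qed
  have c4: "p i = a + v - i" if "a < i" "i \<le> v" for i
  proof -
    have iP: "i \<in> P" using c3 that by auto
    have pi: "a \<le> p i" "p i < v" using iP inr by (auto simp: P_def)
    have eq: "{j\<in>{a..<b}. p j < p i} = {i<..v}"
    proof
      show "{j\<in>{a..<b}. p j < p i} \<subseteq> {i<..v}"
      proof
        fix j assume j: "j \<in> {j\<in>{a..<b}. p j < p i}"
        then have jP: "j \<in> P" using pi by (auto simp: P_def)
        then have "j \<le> v" using c3 by auto
        moreover have "i < j"
        proof (rule ccontr)
          assume "\<not> i < j"
          moreover have "j \<noteq> i" using j by auto
          ultimately have "j < i" by auto
          then have "p i < p j" using c2[OF jP iP] by auto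
          then show False using j by auto
        qed
        ultimately show "j \<in> {i<..v}" by auto
      qed
    next
      show "{i<..v} \<subseteq> {j\<in>{a..<b}. p j < p i}"
      proof
        fix j assume j: "j \<in> {i<..v}"
        then have jP: "j \<in> P" using c3 that by auto
        then show "j \<in> {j\<in>{a..<b}. p j < p i}" using c2[OF iP jP] j by (auto simp: P_def)
      qed
    qed
    have "card {j\<in>{a..<b}. p j < p i} = p i - a"
      using card_below[OF perm, of "p i"] pi v by auto
    then have "p i - a = v - i" using eq by auto
    then show ?thesis using pi that by auto
  qed
  fix i assume "a \<le> i" "i < Suc (p a)"
  then show "p i = a + Suc (p a) - 1 - i"
    using c4[of i] by (cases "i = a") (auto simp: v_def)
qed




lemma struct2:
  assumes L: "lay a b p" and ab: "a < b" and m: "m = Suc (p a)"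
  shows "lay m b (\<lambda>i. if a \<le> i \<and> i < m then i else p i)"
proof -
  define q where "q = (\<lambda>i. if a \<le> i \<and> i < m then i else p i)"
  have perm: "p permutes {a..<b}" and A1: "av231 a b p" and A2: "av312 a b p"
    using L by (auto simp: lay_def)
  have am: "a < m" "m \<le> b" using struct1(1,2)[OF L ab] unfolding m by auto
  have blk: "\<And>i. a \<le> i \<Longrightarrow> i < m \<Longrightarrow> p i = a + m - 1 - i"
    using struct1(3)[OF L ab] unfolding m by blast
  have inj: "\<And>x y. p x = p y \<Longrightarrow> x = y" using permutes_inj[OF perm] by (auto dest: injD)
  have inr: "\<And>i. i \<in> {a..<b} \<Longrightarrow> p i \<in> {a..<b}" using permutes_in_image[OF perm] by blast
  have out: "\<And>i. i \<notin> {a..<b} \<Longrightarrow> p i = i" using permutes_not_in[OF perm] by blast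
  have qperm: "q permutes {m..<b}"
  proof (rule inj_imp_permutes)
    show "inj_on q {m..<b}"
    proof (rule inj_onI)
      fix x y assume "x \<in> {m..<b}" "y \<in> {m..<b}" "q x = q y"
      then have "p x = p y" using am by (auto simp: q_def)
      then show "x = y" by (rule inj)
    qed
    show "finite {m..<b}" by simp
    show "q x \<in> {m..<b}" if x: "x \<in> {m..<b}" for x
    proof -
      have px: "p x \<in> {a..<b}" using inr[of x] x am by auto
      have "\<not> p x < m"
      proof
        assume "p x < m"
        then have "p (a + m - 1 - p x) = p x" using blk[of "a + m - 1 - p x"] px am by auto
        then have "a + m - 1 - p x = x" by (rule inj)
        then show False using x px am by auto
      qed
      then show ?thesis using px x am by (auto simp: q_def)
    qed
    show "q x = x" if "x \<notin> {m..<b}" for x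
      using that out[of x] am by (auto simp: q_def)
  qed
  have e1: "av231 m b q = av231 m b p" by (rule av231_cong) (use am in \<open>auto simp: q_def\<close>)
  have e2: "av312 m b q = av312 m b p" by (rule av312_cong) (use am in \<open>auto simp: q_def\<close>)
  have "av231 m b q" using av231_sub[OF A1, of m b] am e1 by simp
  moreover have "av312 m b q" using av312_sub[OF A2, of m b] am e2 by simp
  ultimately show ?thesis using qperm by (simp add: lay_def q_def)
qed

definition Dd :: "nat \<Rightarrow> nat \<Rightarrow> (nat \<Rightarrow> nat) \<Rightarrow> int" where
  "Dd a b p = (\<Sum>i\<in>{a..<b}. \<bar>int (p i) - int i\<bar>)"
definition Ii :: "nat \<Rightarrow> nat \<Rightarrow> (nat \<Rightarrow> nat) \<Rightarrow> nat" where
  "Ii a b p = card {(i, j). a \<le> i \<and> i < j \<and> j < b \<and> p j < p i}"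
definition Cc :: "nat \<Rightarrow> nat \<Rightarrow> (nat \<Rightarrow> nat) \<Rightarrow> nat" where
  "Cc a b p = card (cycle_of p ` {a..<b})"

lemma iter_agree:
  assumes "\<And>x. x \<in> S \<Longrightarrow> f x \<in> S" "\<And>x. x \<in> S \<Longrightarrow> f x = g x" "x \<in> S"
  shows "(f ^^ k) x = (g ^^ k) x \<and> (f ^^ k) x \<in> S"
proof (induction k)
  case 0 then show ?case using assms(3) by simp
next
  case (Suc k)
  then have h: "(f ^^ k) x = (g ^^ k) x" "(f ^^ k) x \<in> S" by auto
  then have "(f ^^ Suc k) x = g ((g ^^ k) x)" using assms(2)[of "(f ^^ k) x"] by simp
  moreover have "(f ^^ Suc k) x \<in> S" using h assms(1)[of "(f ^^ k) x"] by simp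
  ultimately show ?case by simp
qed

lemma cycle_agree:
  assumes "\<And>x. x \<in> S \<Longrightarrow> f x \<in> S" "\<And>x. x \<in> S \<Longrightarrow> f x = g x" "x \<in> S"
  shows "cycle_of f x = cycle_of g x" "cycle_of f x \<subseteq> S"
proof -
  have h: "\<And>k. (f ^^ k) x = (g ^^ k) x \<and> (f ^^ k) x \<in> S" using iter_agree[of S f g, OF assms] by blast
  show "cycle_of f x = cycle_of g x" unfolding cycle_of_def using h by auto
  show "cycle_of f x \<subseteq> S"
  proof
    fix y assume "y \<in> cycle_of f x"
    then obtain k where k: "(f ^^ k) x = y" by (auto simp: cycle_of_def)
    have "(f ^^ k) x \<in> S" using h[of k] by blast
    then show "y \<in> S" unfolding k .
  qed
qed

lemma in_cycle: "x \<in> cycle_of f x"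
  unfolding cycle_of_def by (auto intro: exI[of _ 0])

lemma fin_pairs: "finite {(i, j). a \<le> i \<and> i < j \<and> j < (b::nat) \<and> P i j}"
  by (rule finite_subset[of _ "{a..<b} \<times> {a..<b}"]) auto

locale split =
  fixes a m b :: nat and p q :: "nat \<Rightarrow> nat"
  assumes am: "a \<le> m" and mb: "m \<le> b"
    and blk: "\<And>i. a \<le> i \<Longrightarrow> i < m \<Longrightarrow> p i = a + m - 1 - i"
    and qperm: "q permutes {m..<b}"
    and pq: "\<And>i. \<not> (a \<le> i \<and> i < m) \<Longrightarrow> p i = q i"
begin

lemma qin: "m \<le> i \<Longrightarrow> i < b \<Longrightarrow> m \<le> q i \<and> q i < b"
  using permutes_in_image[OF qperm, of i] by auto

lemma Dd_split: "Dd a b p = Dd a m (rv a m) + Dd m b q"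
proof -
  have "Dd a b p = Dd a m p + Dd m b p"
    unfolding Dd_def using sum.atLeastLessThan_concat[OF am mb, of "\<lambda>i. \<bar>int (p i) - int i\<bar>"] by simp
  moreover have "Dd a m p = Dd a m (rv a m)"
    unfolding Dd_def by (rule sum.cong) (auto simp: blk rv_def)
  moreover have "Dd m b p = Dd m b q"
    unfolding Dd_def by (rule sum.cong) (auto simp: pq)
  ultimately show ?thesis by simp
qed

lemma Ii_split: "Ii a b p = Ii a m (rv a m) + Ii m b q"
proof -
  have eq: "{(i, j). a \<le> i \<and> i < j \<and> j < b \<and> p j < p i} =
    {(i, j). a \<le> i \<and> i < j \<and> j < m \<and> rv a m j < rv a m i} \<union>
    {(i, j). m \<le> i \<and> i < j \<and> j < b \<and> q j < q i}" (is "?L = ?A \<union> ?B")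
  proof
    show "?L \<subseteq> ?A \<union> ?B"
    proof
      fix x assume "x \<in> ?L"
      then obtain i j where x: "x = (i, j)" "a \<le> i" "i < j" "j < b" "p j < p i" by blast
      consider "j < m" | "m \<le> i" | "i < m \<and> m \<le> j" by linarith
      then show "x \<in> ?A \<union> ?B"
      proof cases
        case 1 then show ?thesis using x blk[of i] blk[of j] by (auto simp: rv_def)
      next
        case 2 then show ?thesis using x pq[of i] pq[of j] by auto
      next
        case 3
        then have "p i < m" using blk[of i] x am by auto
        moreover have "m \<le> p j" using pq[of j] qin[of j] 3 x by auto
        ultimately show ?thesis using x by auto
      qed
    qed
  next
    show "?A \<union> ?B \<subseteq> ?L"
    proof
      fix x assume "x \<in> ?A \<union> ?B"
      then show "x \<in> ?L"
      proof
        assume "x \<in> ?A"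
        then obtain i j where x: "x = (i, j)" "a \<le> i" "i < j" "j < m" "rv a m j < rv a m i" by blast
        then show ?thesis using blk[of i] blk[of j] mb by (auto simp: rv_def)
      next
        assume "x \<in> ?B"
        then obtain i j where x: "x = (i, j)" "m \<le> i" "i < j" "j < b" "q j < q i" by blast
        then show ?thesis using pq[of i] pq[of j] am by auto
      qed
    qed
  qed
  have "card (?A \<union> ?B) = card ?A + card ?B"
    by (rule card_Un_disjoint) (auto simp: fin_pairs)
  then show ?thesis unfolding Ii_def using eq by simp
qed

lemma Cc_split: "Cc a b p = Cc a m (rv a m) + Cc m b q"
proof -
  have inv1: "\<And>x. x \<in> {a..<m} \<Longrightarrow> p x \<in> {a..<m}" using blk am by auto
  have agr1: "\<And>x. x \<in> {a..<m} \<Longrightarrow> p x = rv a m x" using blk by (auto simp: rv_def)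
  have inv2: "\<And>x. x \<in> {m..<b} \<Longrightarrow> p x \<in> {m..<b}" using pq qin by auto
  have agr2: "\<And>x. x \<in> {m..<b} \<Longrightarrow> p x = q x" using pq by auto
  have un: "{a..<b} = {a..<m} \<union> {m..<b}" using am mb by auto
  have "cycle_of p ` {a..<b} = cycle_of p ` {a..<m} \<union> cycle_of p ` {m..<b}"
    using un by auto
  moreover have "cycle_of p ` {a..<m} \<inter> cycle_of p ` {m..<b} = {}"
  proof (rule ccontr)
    assume "cycle_of p ` {a..<m} \<inter> cycle_of p ` {m..<b} \<noteq> {}"
    then obtain i j where ij: "i \<in> {a..<m}" "j \<in> {m..<b}" "cycle_of p i = cycle_of p j" by blast
    have "i \<in> cycle_of p i" by (rule in_cycle)
    moreover have "cycle_of p j \<subseteq> {m..<b}" by (rule cycle_agree(2)[OF inv2 agr2 ij(2)])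
    ultimately have "i \<in> {m..<b}" using ij(3) by blast
    then show False using ij by auto
  qed
  ultimately have "Cc a b p = card (cycle_of p ` {a..<m}) + card (cycle_of p ` {m..<b})"
    unfolding Cc_def by (simp add: card_Un_disjoint)
  moreover have "cycle_of p ` {a..<m} = cycle_of (rv a m) ` {a..<m}"
    using cycle_agree(1)[OF inv1 agr1] by (rule image_cong[OF refl])
  moreover have "cycle_of p ` {m..<b} = cycle_of q ` {m..<b}"
    using cycle_agree(1)[OF inv2 agr2] by (rule image_cong[OF refl])
  ultimately show ?thesis unfolding Cc_def by simp
qed

end



lemma fin_pairs0: "finite {(i, j). a \<le> i \<and> i < j \<and> j < (b::nat)}"
  by (rule finite_subset[of _ "{a..<b} \<times> {a..<b}"]) auto

lemma card_pairs: "2 * int (card {(i, j). a \<le> i \<and> i < j \<and> j < a + L}) = int L * (int L - 1)"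
proof (induction L)
  case 0
  have e: "{(i, j). a \<le> i \<and> i < j \<and> j < a + 0} = {}" by auto
  show ?case unfolding e by simp
next
  case (Suc L)
  have eq: "{(i, j). a \<le> i \<and> i < j \<and> j < a + Suc L} =
      {(i, j). a \<le> i \<and> i < j \<and> j < a + L} \<union> (\<lambda>i. (i, a + L)) ` {a..<a+L}" by auto
  have "card ({(i, j). a \<le> i \<and> i < j \<and> j < a + L} \<union> (\<lambda>i. (i, a + L)) ` {a..<a+L}) =
     card {(i, j). a \<le> i \<and> i < j \<and> j < a + L} + card ((\<lambda>i. (i, a + L)) ` {a..<a+L})"
    by (rule card_Un_disjoint) (auto simp: fin_pairs0)
  moreover have "card ((\<lambda>i. (i, a + L)) ` {a..<a+L}) = L"
    by (subst card_image) (auto simp: inj_on_def)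
  ultimately have "card {(i, j). a \<le> i \<and> i < j \<and> j < a + Suc L} = card {(i, j). a \<le> i \<and> i < j \<and> j < a + L} + L"
    using eq by simp
  then show ?case using Suc.IH by (simp add: algebra_simps)
qed

lemma Ii_blk: "2 * int (Ii a (a + L) (rv a (a + L))) = int L * (int L - 1)"
proof -
  have "{(i, j). a \<le> i \<and> i < j \<and> j < a + L \<and> rv a (a + L) j < rv a (a + L) i} =
        {(i, j). a \<le> i \<and> i < j \<and> j < a + L}"
    using rv_decr[of a _ _ "a + L"] by auto
  then show ?thesis unfolding Ii_def using card_pairs by simp
qed

definition G :: "nat \<Rightarrow> int" where
  "G L = (\<Sum>j<L. \<bar>int L - 1 - 2 * int j\<bar>)"

lemma G_step: "G (Suc (Suc L)) = G L + 2 * (int L + 1)"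
proof -
  have "G (Suc (Suc L)) = \<bar>int L + 1\<bar> + (\<Sum>j<Suc L. \<bar>int (Suc (Suc L)) - 1 - 2 * int (Suc j)\<bar>)"
    unfolding G_def by (subst sum.lessThan_Suc_shift) simp
  also have "(\<Sum>j<Suc L. \<bar>int (Suc (Suc L)) - 1 - 2 * int (Suc j)\<bar>) = (\<Sum>j<Suc L. \<bar>int L - 1 - 2 * int j\<bar>)"
    by (rule sum.cong) auto
  also have "\<dots> = G L + \<bar>int L - 1 - 2 * int L\<bar>"
    unfolding G_def by simp
  finally show ?thesis by simp
qed

lemma G_val: "2 * G L = int L * int L - int (L mod 2)"
proof (induction L rule: less_induct)
  case (less L)
  show ?case
  proof (cases L)
    case 0 then show ?thesis by (simp add: G_def)
  next
    case (Suc L1)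
    show ?thesis
    proof (cases L1)
      case 0 then show ?thesis using Suc by (simp add: G_def)
    next
      case (Suc L2)
      have "L = Suc (Suc L2)" using Suc \<open>L = Suc L1\<close> by simp
      moreover have "2 * G L2 = int L2 * int L2 - int (L2 mod 2)" using less calculation by simp
      moreover have "Suc (Suc L2) mod 2 = L2 mod 2" by simp
      ultimately show ?thesis using G_step[of L2] by (simp add: algebra_simps)
    qed
  qed
qed

lemma Dd_blk: "Dd a (a + L) (rv a (a + L)) = G L"
proof -
  have "Dd a (a + L) (rv a (a + L)) = (\<Sum>i\<in>{0 + a..<L + a}. \<bar>int (rv a (a + L) i) - int i\<bar>)"
    unfolding Dd_def by (simp add: add.commute)
  also have "\<dots> = (\<Sum>i\<in>{0..<L}. \<bar>int (rv a (a + L) (i + a)) - int (i + a)\<bar>)"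
    by (rule sum.shift_bounds_nat_ivl)
  also have "\<dots> = (\<Sum>i\<in>{0..<L}. \<bar>int L - 1 - 2 * int i\<bar>)"
    by (rule sum.cong) (auto simp: rv_def of_nat_diff)
  finally show ?thesis unfolding G_def by (simp add: atLeast0LessThan)
qed

lemma rv_invol: "rv a b (rv a b i) = i"
  by (auto simp: rv_def)

lemma rv_pow: "(rv a b ^^ k) i = (if even k then i else rv a b i)"
  by (induction k) (auto simp: rv_invol)

lemma rv_cycle: "cycle_of (rv a b) i = {i, rv a b i}"
proof
  show "cycle_of (rv a b) i \<subseteq> {i, rv a b i}"
    unfolding cycle_of_def by (auto simp: rv_pow)
  have "i \<in> cycle_of (rv a b) i" by (rule in_cycle)
  moreover have "rv a b i \<in> cycle_of (rv a b) i"
    unfolding cycle_of_def by (rule CollectI, rule exI[of _ 1]) simp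
  ultimately show "{i, rv a b i} \<subseteq> cycle_of (rv a b) i" by auto
qed

lemma Cc_blk: "2 * Cc a (a + L) (rv a (a + L)) = L + L mod 2"
proof -
  define b where "b = a + L"
  define h where "h = (L + 1) div 2"
  have hL: "h \<le> L" "L \<le> 2 * h" "2 * h = L + L mod 2" unfolding h_def by presburger+
  have img: "cycle_of (rv a b) ` {a..<b} = (\<lambda>i. {i, rv a b i}) ` {a..<a + h}"
  proof
    show "cycle_of (rv a b) ` {a..<b} \<subseteq> (\<lambda>i. {i, rv a b i}) ` {a..<a + h}"
    proof
      fix X assume "X \<in> cycle_of (rv a b) ` {a..<b}"
      then obtain i where i: "i \<in> {a..<b}" "X = {i, rv a b i}" by (auto simp: rv_cycle)
      show "X \<in> (\<lambda>i. {i, rv a b i}) ` {a..<a + h}"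
      proof (cases "i < a + h")
        case True then show ?thesis using i by auto
      next
        case False
        have "rv a b i \<in> {a..<a + h}" using False i hL by (auto simp: rv_def b_def)
        moreover have "X = {rv a b i, rv a b (rv a b i)}" using i by (auto simp: rv_invol)
        ultimately show ?thesis by blast
      qed
    qed
  next
    show "(\<lambda>i. {i, rv a b i}) ` {a..<a + h} \<subseteq> cycle_of (rv a b) ` {a..<b}"
      using hL by (auto simp: rv_cycle b_def)
  qed
  have inj: "inj_on (\<lambda>i. {i, rv a b i}) {a..<a + h}"
  proof (rule inj_onI)
    fix i j assume i: "i \<in> {a..<a + h}" and j: "j \<in> {a..<a + h}" and e: "{i, rv a b i} = {j, rv a b j}"
    have ri: "rv a b i = a + b - 1 - i" "rv a b j = a + b - 1 - j" using i j hL by (auto simp: rv_def b_def)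
    from e have "i = j \<or> i = rv a b j" by (auto simp: doubleton_eq_iff)
    then show "i = j"
    proof
      assume "i = rv a b j"
      then have "i = a + b - 1 - j" using ri by simp
      then show "i = j" using i j hL by (auto simp: b_def)
    qed
  qed
  have "Cc a b (rv a b) = h" unfolding Cc_def img using card_image[OF inj] by simp
  then show ?thesis using hL b_def by simp
qed

lemma Cc_le: "Cc a b p \<le> b - a"
  unfolding Cc_def using card_image_le[of "{a..<b}" "cycle_of p"] by simp

lemma lay_shallow: "lay a b p \<Longrightarrow> int (Ii a b p) + int (b - a) = Dd a b p + int (Cc a b p)"
proof (induction "b - a" arbitrary: a p rule: less_induct)
  case less
  show ?case
  proof (cases "a < b")
    case False
    have e: "{(i, j). a \<le> i \<and> i < j \<and> j < b \<and> p j < p i} = {}" using False by auto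
    show ?thesis using False unfolding Ii_def Dd_def Cc_def e by simp
  next
    case True
    define m where "m = Suc (p a)"
    define q where "q = (\<lambda>i. if a \<le> i \<and> i < m then i else p i)"
    have am: "a < m" "m \<le> b" using struct1(1,2)[OF less.prems True] unfolding m_def by auto
    have blk: "\<And>i. a \<le> i \<Longrightarrow> i < m \<Longrightarrow> p i = a + m - 1 - i"
      using struct1(3)[OF less.prems True] unfolding m_def by blast
    have Lq: "lay m b q" using struct2[OF less.prems True m_def] unfolding q_def .
    then have qperm: "q permutes {m..<b}" by (simp add: lay_def)
    interpret S: split a m b p q
      by unfold_locales (use am blk qperm in \<open>auto simp: q_def\<close>)
    have IH: "int (Ii m b q) + int (b - m) = Dd m b q + int (Cc m b q)"
    proof -
      have "b - m < b - a" using am True by simp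
      then show ?thesis by (rule less.hyps[OF _ Lq])
    qed
    define L where "L = m - a"
    have mL: "m = a + L" using am L_def by simp
    have b1: "2 * int (Ii a m (rv a m)) = int L * (int L - 1)" using Ii_blk[of a L] mL by simp
    have b2: "2 * Dd a m (rv a m) = int L * int L - int (L mod 2)" using Dd_blk[of a L] G_val[of L] mL by simp
    have b3: "2 * int (Cc a m (rv a m)) = int L + int (L mod 2)"
      using Cc_blk[of a L] mL by (metis of_nat_add of_nat_mult of_nat_numeral)
    have "int (b - a) = int L + int (b - m)" using am L_def by simp
    then show ?thesis using S.Dd_split S.Ii_split S.Cc_split IH b1 b2 b3 by (simp add: algebra_simps)
  qed
qed



definition cs :: "nat \<Rightarrow> nat \<Rightarrow> (nat \<Rightarrow> nat) \<Rightarrow> bool" where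
  "cs a b p \<longleftrightarrow> (\<forall>i. a \<le> i \<and> i < b \<longrightarrow> p (a + b - 1 - i) = a + b - 1 - p i)"

definition CS :: "nat \<Rightarrow> nat \<Rightarrow> (nat \<Rightarrow> nat) set" where
  "CS a b = {p. lay a b p \<and> cs a b p}"

definition gl :: "nat \<Rightarrow> nat \<Rightarrow> nat \<Rightarrow> (nat \<Rightarrow> nat) \<Rightarrow> nat \<Rightarrow> nat" where
  "gl a b k q = (\<lambda>i. if a \<le> i \<and> i < a + k then a + (a + k) - 1 - i
      else if b - k \<le> i \<and> i < b then (b - k) + b - 1 - i else q i)"

lemma rv_CS: "rv a b \<in> CS a b"
  unfolding CS_def cs_def using rv_lay[of a b] by (auto simp: rv_def)

lemma CS_fin: "finite (CS a b)"
  by (rule finite_subset[of _ "{p. p permutes {a..<b}}"]) (auto simp: CS_def lay_def finite_permutations)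

lemma gl_CS:
  assumes k: "1 \<le> k" "a + 2 * k \<le> b" and q: "q \<in> CS (a + k) (b - k)"
  shows "gl a b k q \<in> CS a b"
proof -
  have ql: "lay (a + k) (b - k) q" and qc: "cs (a + k) (b - k) q" using q by (auto simp: CS_def)
  have qperm: "q permutes {a + k..<b - k}" using ql by (simp add: lay_def)
  have qin: "\<And>i. a + k \<le> i \<Longrightarrow> i < b - k \<Longrightarrow> a + k \<le> q i \<and> q i < b - k"
    using permutes_in_image[OF qperm] by auto
  have qout: "\<And>i. \<not> (a + k \<le> i \<and> i < b - k) \<Longrightarrow> q i = i"
    using permutes_not_in[OF qperm] by auto
  have comp: "gl a b k q = rv a (a + k) \<circ> (rv (b - k) b \<circ> q)"
  proof
    fix i
    show "gl a b k q i = (rv a (a + k) \<circ> (rv (b - k) b \<circ> q)) i"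
    proof (cases "a + k \<le> i \<and> i < b - k")
      case True then show ?thesis using qin[of i] by (auto simp: gl_def rv_def)
    next
      case False then show ?thesis using qout[of i] k by (auto simp: gl_def rv_def)
    qed
  qed
  have "rv a (a + k) permutes {a..<b}" by (rule permutes_subset[OF rv_permutes]) (use k in auto)
  moreover have "rv (b - k) b permutes {a..<b}" by (rule permutes_subset[OF rv_permutes]) (use k in auto)
  moreover have "q permutes {a..<b}" by (rule permutes_subset[OF qperm]) (use k in auto)
  ultimately have perm: "gl a b k q permutes {a..<b}" unfolding comp by (intro permutes_compose)
  let ?p = "gl a b k q"
  have v1: "\<And>i. a \<le> i \<Longrightarrow> i < a + k \<Longrightarrow> ?p i < a + k" by (auto simp: gl_def)
  have v2: "\<And>i. a + k \<le> i \<Longrightarrow> i < b - k \<Longrightarrow> a + k \<le> ?p i \<and> ?p i < b - k"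
    using qin by (auto simp: gl_def)
  have v3: "\<And>i. b - k \<le> i \<Longrightarrow> i < b \<Longrightarrow> b - k \<le> ?p i" using k by (auto simp: gl_def)
  have e1: "av231 a (a + k) ?p = av231 a (a + k) (rv a (a + k))" "av312 a (a + k) ?p = av312 a (a + k) (rv a (a + k))"
    by (rule av231_cong av312_cong; auto simp: gl_def rv_def)+
  have e2: "av231 (a + k) (b - k) ?p = av231 (a + k) (b - k) q" "av312 (a + k) (b - k) ?p = av312 (a + k) (b - k) q"
    by (rule av231_cong av312_cong; auto simp: gl_def)+
  have e3: "av231 (b - k) b ?p = av231 (b - k) b (rv (b - k) b)" "av312 (b - k) b ?p = av312 (b - k) b (rv (b - k) b)"
    by (rule av231_cong av312_cong; use k in \<open>auto simp: gl_def rv_def\<close>)+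
  have r1: "av231 a (a + k) ?p" "av312 a (a + k) ?p" using e1 rv_lay[of a "a + k"] by (auto simp: lay_def)
  have r2: "av231 (a + k) (b - k) ?p" "av312 (a + k) (b - k) ?p" using e2 ql by (auto simp: lay_def)
  have r3: "av231 (b - k) b ?p" "av312 (b - k) b ?p" using e3 rv_lay[of "b - k" b] by (auto simp: lay_def)
  have lt23: "\<And>i j. a + k \<le> i \<Longrightarrow> i < b - k \<Longrightarrow> b - k \<le> j \<Longrightarrow> j < b \<Longrightarrow> ?p i < ?p j"
    using v2 v3 by (meson less_le_trans)
  have s23: "av231 (a + k) b ?p" "av312 (a + k) b ?p"
    using av_sum[of "a + k" "b - k" b ?p] lt23 r2 r3 k by auto
  have lt13: "\<And>i j. a \<le> i \<Longrightarrow> i < a + k \<Longrightarrow> a + k \<le> j \<Longrightarrow> j < b \<Longrightarrow> ?p i < ?p j"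
  proof -
    fix i j assume h: "a \<le> i" "i < a + k" "a + k \<le> j" "j < b"
    have "?p i < a + k" using v1 h by auto
    moreover have "a + k \<le> ?p j"
    proof (cases "j < b - k")
      case True then show ?thesis using v2 h by auto
    next
      case False then show ?thesis using v3[of j] h k by auto
    qed
    ultimately show "?p i < ?p j" by auto
  qed
  have s: "av231 a b ?p" "av312 a b ?p"
    using av_sum[of a "a + k" b ?p] lt13 r1 s23 k by auto
  have c: "cs a b ?p"
    unfolding cs_def
  proof (intro allI impI)
    fix i assume i: "a \<le> i \<and> i < b"
    consider "i < a + k" | "a + k \<le> i \<and> i < b - k" | "b - k \<le> i" by linarith
    then show "?p (a + b - 1 - i) = a + b - 1 - ?p i"
    proof cases
      case 1 then show ?thesis using i k by (auto simp: gl_def)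
    next
      case 3 then show ?thesis using i k by (auto simp: gl_def)
    next
      case 2
      have "q (a + k + (b - k) - 1 - i) = a + k + (b - k) - 1 - q i" using qc 2 by (auto simp: cs_def)
      moreover have "a + k + (b - k) - 1 - i = a + b - 1 - i" using k by auto
      moreover have "a + k \<le> a + b - 1 - i \<and> a + b - 1 - i < b - k" using 2 k by auto
      ultimately show ?thesis using 2 k qin[of i] by (auto simp: gl_def)
    qed
  qed
  show ?thesis using perm s c by (simp add: CS_def lay_def)
qed



lemma CS_sub:
  assumes p: "p \<in> CS a b" and ab: "a \<le> b"
  shows "p \<in> insert (rv a b) (\<Union>k\<in>{1..(b - a) div 2}. gl a b k ` CS (a + k) (b - k))"
proof -
  have L: "lay a b p" and c: "cs a b p" using p by (auto simp: CS_def)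
  have perm: "p permutes {a..<b}" using L by (simp add: lay_def)
  have out: "\<And>i. i \<notin> {a..<b} \<Longrightarrow> p i = i" using permutes_not_in[OF perm] by blast
  have inj: "\<And>x y. p x = p y \<Longrightarrow> x = y" using permutes_inj[OF perm] by (auto dest: injD)
  have inr: "\<And>i. i \<in> {a..<b} \<Longrightarrow> p i \<in> {a..<b}" using permutes_in_image[OF perm] by blast
  show ?thesis
  proof (cases "a < b")
    case False
    then have "p = rv a b" using out by (auto simp: rv_def)
    then show ?thesis by simp
  next
    case True
    define m where "m = Suc (p a)"
    have am: "a < m" "m \<le> b" using struct1(1,2)[OF L True] unfolding m_def by auto
    have blk: "\<And>i. a \<le> i \<Longrightarrow> i < m \<Longrightarrow> p i = a + m - 1 - i"
      using struct1(3)[OF L True] unfolding m_def by blast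
    show ?thesis
    proof (cases "m = b")
      case True
      then have "p = rv a b" using out blk by (auto simp: rv_def)
      then show ?thesis by simp
    next
      case False
      then have mb: "m < b" using am by simp
      define k where "k = m - a"
      have mk: "m = a + k" "1 \<le> k" using am k_def by auto
      have last: "p i = (b - k) + b - 1 - i" if i: "b - k \<le> i" "i < b" for i
      proof -
        define i' where "i' = a + b - 1 - i"
        have i': "a \<le> i'" "i' < m" "a + b - 1 - i' = i" using i mk mb unfolding i'_def by auto
        have "p i = a + b - 1 - p i'" using c i' unfolding cs_def by (metis less_trans mb)
        also have "p i' = a + m - 1 - i'" using blk i' by simp
        finally show ?thesis using i' i mk mb unfolding i'_def by auto
      qed
      have k2: "a + 2 * k \<le> b"
      proof (rule ccontr)
        assume "\<not> a + 2 * k \<le> b"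
        then have "b - k \<le> m - 1" "m - 1 < b" using mk mb by auto
        then have "p (m - 1) = (b - k) + b - 1 - (m - 1)" by (rule last)
        moreover have "p (m - 1) = a" using blk[of "m - 1"] am by auto
        ultimately show False using mk mb \<open>\<not> a + 2 * k \<le> b\<close> by auto
      qed
      define q where "q = (\<lambda>i. if a + k \<le> i \<and> i < b - k then p i else i)"
      have pg: "p = gl a b k q"
      proof
        fix i
        consider "i < a" | "a \<le> i \<and> i < a + k" | "a + k \<le> i \<and> i < b - k" | "b - k \<le> i \<and> i < b" | "b \<le> i"
          by linarith
        then show "p i = gl a b k q i"
        proof cases
          case 1 then show ?thesis using out[of i] k2 by (auto simp: gl_def q_def)
        next
          case 2 then show ?thesis using blk[of i] mk by (auto simp: gl_def)
        next
          case 3 then show ?thesis using k2 by (auto simp: gl_def q_def)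
        next
          case 4 then show ?thesis using last[of i] k2 mk by (auto simp: gl_def)
        next
          case 5 then show ?thesis using out[of i] k2 by (auto simp: gl_def q_def)
        qed
      qed
      have qperm: "q permutes {a + k..<b - k}"
      proof (rule inj_imp_permutes)
        show "inj_on q {a + k..<b - k}"
        proof (rule inj_onI)
          fix x y assume "x \<in> {a + k..<b - k}" "y \<in> {a + k..<b - k}" "q x = q y"
          then have "p x = p y" by (auto simp: q_def)
          then show "x = y" by (rule inj)
        qed
        show "finite {a + k..<b - k}" by simp
        show "q x \<in> {a + k..<b - k}" if x: "x \<in> {a + k..<b - k}" for x
        proof -
          have px: "p x \<in> {a..<b}" using inr[of x] x by auto
          have n1: "\<not> p x < a + k"
          proof
            assume "p x < a + k"
            then have "p (a + m - 1 - p x) = p x" using blk[of "a + m - 1 - p x"] px mk by auto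
            then have "a + m - 1 - p x = x" by (rule inj)
            then show False using x px mk by auto
          qed
          have n2: "\<not> b - k \<le> p x"
          proof
            assume h: "b - k \<le> p x"
            then have "p ((b - k) + b - 1 - p x) = p x" using last[of "(b - k) + b - 1 - p x"] px mk k2 by auto
            then have "(b - k) + b - 1 - p x = x" by (rule inj)
            then show False using x px mk h k2 by auto
          qed
          show ?thesis using n1 n2 x px by (auto simp: q_def)
        qed
        show "q x = x" if "x \<notin> {a + k..<b - k}" for x using that by (auto simp: q_def)
      qed
      have e1: "av231 (a + k) (b - k) q = av231 (a + k) (b - k) p" by (rule av231_cong) (auto simp: q_def)
      have e2: "av312 (a + k) (b - k) q = av312 (a + k) (b - k) p" by (rule av312_cong) (auto simp: q_def)
      have A: "av231 (a + k) (b - k) q" "av312 (a + k) (b - k) q"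
        using av231_sub[of a b p "a + k" "b - k"] av312_sub[of a b p "a + k" "b - k"] L e1 e2
        by (auto simp: lay_def)
      have qc: "cs (a + k) (b - k) q"
        unfolding cs_def
      proof (intro allI impI)
        fix i assume i: "a + k \<le> i \<and> i < b - k"
        have e: "a + k + (b - k) - 1 - i = a + b - 1 - i" using k2 by auto
        have r: "a + k \<le> a + b - 1 - i \<and> a + b - 1 - i < b - k" using i k2 by auto
        have "p (a + b - 1 - i) = a + b - 1 - p i" using c i k2 unfolding cs_def by auto
        then show "q (a + k + (b - k) - 1 - i) = a + k + (b - k) - 1 - q i"
          unfolding e using r i k2 by (simp add: q_def)
      qed
      have "q \<in> CS (a + k) (b - k)" using qperm A qc by (simp add: CS_def lay_def)
      moreover have "k \<in> {1..(b - a) div 2}" using mk k2 by auto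
      ultimately show ?thesis using pg by blast
    qed
  qed
qed



lemma CS_eq: "a \<le> b \<Longrightarrow> CS a b = insert (rv a b) (\<Union>k\<in>{1..(b - a) div 2}. gl a b k ` CS (a + k) (b - k))"
proof
  assume ab: "a \<le> b"
  show "CS a b \<subseteq> insert (rv a b) (\<Union>k\<in>{1..(b - a) div 2}. gl a b k ` CS (a + k) (b - k))"
    using CS_sub[OF _ ab] by blast
  show "insert (rv a b) (\<Union>k\<in>{1..(b - a) div 2}. gl a b k ` CS (a + k) (b - k)) \<subseteq> CS a b"
  proof
    fix p assume "p \<in> insert (rv a b) (\<Union>k\<in>{1..(b - a) div 2}. gl a b k ` CS (a + k) (b - k))"
    then show "p \<in> CS a b"
    proof
      assume "p = rv a b" then show ?thesis using rv_CS by simp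
    next
      assume "p \<in> (\<Union>k\<in>{1..(b - a) div 2}. gl a b k ` CS (a + k) (b - k))"
      then obtain k q where "k \<in> {1..(b - a) div 2}" "q \<in> CS (a + k) (b - k)" "p = gl a b k q" by blast
      then show ?thesis using gl_CS[of k a b q] ab by auto
    qed
  qed
qed

lemma gl_a: "1 \<le> k \<Longrightarrow> gl a b k q a = a + k - 1"
  by (simp add: gl_def)

lemma gl_inj:
  assumes k: "1 \<le> k" "a + 2 * k \<le> b"
  shows "inj_on (gl a b k) (CS (a + k) (b - k))"
proof (rule inj_onI)
  fix q1 q2 assume q1: "q1 \<in> CS (a + k) (b - k)" and q2: "q2 \<in> CS (a + k) (b - k)" and e: "gl a b k q1 = gl a b k q2"
  have p1: "q1 permutes {a + k..<b - k}" and p2: "q2 permutes {a + k..<b - k}"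
    using q1 q2 by (auto simp: CS_def lay_def)
  show "q1 = q2"
  proof
    fix i show "q1 i = q2 i"
    proof (cases "a + k \<le> i \<and> i < b - k")
      case True
      have "gl a b k q1 i = gl a b k q2 i" using e by simp
      then show ?thesis using True k by (auto simp: gl_def split: if_splits)
    next
      case False
      then show ?thesis using permutes_not_in[OF p1, of i] permutes_not_in[OF p2, of i] by auto
    qed
  qed
qed

lemma geo: "1 + (\<Sum>k\<in>{1..h}. (2::nat) ^ (h - k)) = 2 ^ h"
proof (induction h)
  case 0 then show ?case by simp
next
  case (Suc h)
  have "(\<Sum>k\<in>{1..Suc h}. (2::nat) ^ (Suc h - k)) = (\<Sum>k\<in>{1..h}. 2 ^ (Suc h - k)) + 1"
    by (simp add: sum.cl_ivl_Suc)
  also have "(\<Sum>k\<in>{1..h}. (2::nat) ^ (Suc h - k)) = (\<Sum>k\<in>{1..h}. 2 * 2 ^ (h - k))"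
    by (rule sum.cong) (auto simp: Suc_diff_le)
  also have "\<dots> = 2 * (\<Sum>k\<in>{1..h}. 2 ^ (h - k))" by (simp add: sum_distrib_left)
  finally show ?case using Suc.IH by simp
qed

lemma card_CS: "a \<le> b \<Longrightarrow> card (CS a b) = 2 ^ ((b - a) div 2)"
proof (induction "b - a" arbitrary: a b rule: less_induct)
  case less
  define h where "h = (b - a) div 2"
  define U where "U = (\<Union>k\<in>{1..h}. gl a b k ` CS (a + k) (b - k))"
  have kb: "\<And>k. k \<in> {1..h} \<Longrightarrow> 1 \<le> k \<and> a + 2 * k \<le> b" using less.prems by (auto simp: h_def)
  have nU: "rv a b \<notin> U"
  proof
    assume "rv a b \<in> U"
    then obtain k q where k: "k \<in> {1..h}" and e: "rv a b = gl a b k q" by (auto simp: U_def)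
    have "rv a b a = a + k - 1" using e gl_a[of k a b q] kb[OF k] by simp
    moreover have "rv a b a = b - 1" using kb[OF k] by (auto simp: rv_def)
    ultimately show False using kb[OF k] by auto
  qed
  have fU: "finite U" unfolding U_def using CS_fin by auto
  have cU: "card U = (\<Sum>k\<in>{1..h}. card (gl a b k ` CS (a + k) (b - k)))"
    unfolding U_def
  proof (rule card_UN_disjoint)
    show "finite {1..h}" by simp
    show "\<forall>i\<in>{1..h}. finite (gl a b i ` CS (a + i) (b - i))" using CS_fin by auto
    show "\<forall>i\<in>{1..h}. \<forall>j\<in>{1..h}. i \<noteq> j \<longrightarrow> gl a b i ` CS (a + i) (b - i) \<inter> gl a b j ` CS (a + j) (b - j) = {}"
    proof (intro ballI impI)
      fix i j assume i: "i \<in> {1..h}" and j: "j \<in> {1..h}" and ij: "i \<noteq> j"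
      show "gl a b i ` CS (a + i) (b - i) \<inter> gl a b j ` CS (a + j) (b - j) = {}"
      proof (rule ccontr)
        assume "gl a b i ` CS (a + i) (b - i) \<inter> gl a b j ` CS (a + j) (b - j) \<noteq> {}"
        then obtain q1 q2 where "gl a b i q1 = gl a b j q2" by blast
        then have "gl a b i q1 a = gl a b j q2 a" by simp
        then have "a + i - 1 = a + j - 1" using gl_a[of i a b q1] gl_a[of j a b q2] kb[OF i] kb[OF j] by simp
        then show False using kb[OF i] kb[OF j] ij by auto
      qed
    qed
  qed
  also have "\<dots> = (\<Sum>k\<in>{1..h}. 2 ^ (h - k))"
  proof (rule sum.cong[OF refl])
    fix k assume k: "k \<in> {1..h}"
    have "card (gl a b k ` CS (a + k) (b - k)) = card (CS (a + k) (b - k))"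
      using card_image[OF gl_inj] kb[OF k] by blast
    also have "\<dots> = 2 ^ ((b - k - (a + k)) div 2)"
    proof (rule less.hyps)
      show "b - k - (a + k) < b - a" "a + k \<le> b - k" using kb[OF k] by auto
    qed
    also have "(b - k - (a + k)) div 2 = h - k"
    proof -
      define y where "y = b - a - 2 * k"
      have y: "b - a = 2 * k + y" using kb[OF k] unfolding y_def by simp
      then have "b - k - (a + k) = y" by simp
      moreover have "h = k + y div 2" unfolding h_def y by simp
      ultimately show ?thesis by simp
    qed
    finally show "card (gl a b k ` CS (a + k) (b - k)) = 2 ^ (h - k)" .
  qed
  finally have "card U = (\<Sum>k\<in>{1..h}. 2 ^ (h - k))" .
  moreover have "CS a b = insert (rv a b) U" using CS_eq[OF less.prems] unfolding U_def h_def .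
  ultimately have "card (CS a b) = 1 + (\<Sum>k\<in>{1..h}. 2 ^ (h - k))" using nU fU by simp
  then show ?case using geo[of h] unfolding h_def by simp
qed



lemma link_av: "avoids_231 n p = av231 1 (Suc n) p"
  unfolding avoids_231_def av231_def by (simp add: less_Suc_eq_le)

lemma link_cs: "centrosymmetric n p = cs 1 (Suc n) p"
  unfolding centrosymmetric_def cs_def by auto

lemma ivl: "{1..n} = {1..<Suc n}" by auto

lemma link_312:
  assumes perm: "p permutes {1..<Suc n}" and A: "av231 1 (Suc n) p" and C: "cs 1 (Suc n) p"
  shows "av312 1 (Suc n) p"
  unfolding av312_def
proof
  assume "\<exists>i j k. 1 \<le> i \<and> i < j \<and> j < k \<and> k < Suc n \<and> p j < p k \<and> p k < p i"
  then obtain i j k where ijk: "1 \<le> i" "i < j" "j < k" "k < Suc n" "p j < p k" "p k < p i" by blast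
  have inr: "\<And>x. 1 \<le> x \<Longrightarrow> x < Suc n \<Longrightarrow> 1 \<le> p x \<and> p x < Suc n"
    using permutes_in_image[OF perm] by auto
  have r: "\<And>x. 1 \<le> x \<Longrightarrow> x < Suc n \<Longrightarrow> p (Suc n - x) = Suc n - p x"
    using C unfolding cs_def by auto
  have "p (Suc n - i) = Suc n - p i" "p (Suc n - j) = Suc n - p j" "p (Suc n - k) = Suc n - p k"
    using r ijk by auto
  moreover have "1 \<le> p i" "p i < Suc n" "1 \<le> p j" "p j < Suc n" "1 \<le> p k" "p k < Suc n"
    using inr ijk by auto
  ultimately have "1 \<le> Suc n - k \<and> Suc n - k < Suc n - j \<and> Suc n - j < Suc n - i \<and> Suc n - i < Suc n \<and>
      p (Suc n - i) < p (Suc n - k) \<and> p (Suc n - k) < p (Suc n - j)"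
    using ijk by auto
  then show False using A unfolding av231_def by blast
qed

lemma link_shallow:
  assumes "lay 1 (Suc n) p"
  shows "shallow n p"
proof -
  have e: "int (Ii 1 (Suc n) p) + int (Suc n - 1) = Dd 1 (Suc n) p + int (Cc 1 (Suc n) p)"
    by (rule lay_shallow[OF assms])
  have le: "Cc 1 (Suc n) p \<le> n" using Cc_le[of 1 "Suc n" p] by simp
  have "displacement n p = Dd 1 (Suc n) p" unfolding displacement_def Dd_def ivl ..
  moreover have "inversions n p = Ii 1 (Suc n) p"
  proof -
    have "{(i, j). i \<in> {1..n} \<and> j \<in> {1..n} \<and> i < j \<and> p j < p i} =
          {(i, j). 1 \<le> i \<and> i < j \<and> j < Suc n \<and> p j < p i}" by auto
    then show ?thesis unfolding inversions_def Ii_def by simp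
  qed
  moreover have "num_cycles n p = Cc 1 (Suc n) p" unfolding num_cycles_def Cc_def ivl ..
  ultimately show ?thesis unfolding shallow_def reflection_len_def using e le by (simp add: of_nat_diff)
qed

theorem theorem4p7:
  fixes n :: nat
  assumes "n \<ge> 1"
  shows "card {p. p permutes {1..n} \<and> avoids_231 n p \<and> centrosymmetric n p \<and> shallow n p}
           = 2 ^ (n div 2)
         \<and> (\<forall>p. p permutes {1..n} \<and> avoids_231 n p \<and> centrosymmetric n p \<longrightarrow> shallow n p)"
proof -
  have toCS: "p \<in> CS 1 (Suc n)" if "p permutes {1..n}" "avoids_231 n p" "centrosymmetric n p" for p
  proof -
    have "p permutes {1..<Suc n}" using that(1) unfolding ivl .
    moreover have "av231 1 (Suc n) p" "cs 1 (Suc n) p"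
      using that by (auto simp: link_av link_cs)
    ultimately have "p permutes {1..<Suc n}" "av231 1 (Suc n) p" "cs 1 (Suc n) p" by auto
    then show ?thesis using link_312 by (auto simp: CS_def lay_def)
  qed
  have part2: "\<forall>p. p permutes {1..n} \<and> avoids_231 n p \<and> centrosymmetric n p \<longrightarrow> shallow n p"
    using toCS link_shallow by (auto simp: CS_def)
  have "{p. p permutes {1..n} \<and> avoids_231 n p \<and> centrosymmetric n p \<and> shallow n p} = CS 1 (Suc n)"
  proof
    show "{p. p permutes {1..n} \<and> avoids_231 n p \<and> centrosymmetric n p \<and> shallow n p} \<subseteq> CS 1 (Suc n)"
      using toCS by auto
    show "CS 1 (Suc n) \<subseteq> {p. p permutes {1..n} \<and> avoids_231 n p \<and> centrosymmetric n p \<and> shallow n p}"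
    proof
      fix p assume p: "p \<in> CS 1 (Suc n)"
      then have "p permutes {1..<Suc n}" by (simp add: CS_def lay_def)
      then have "p permutes {1..n}" unfolding ivl .
      then show "p \<in> {p. p permutes {1..n} \<and> avoids_231 n p \<and> centrosymmetric n p \<and> shallow n p}"
        using p link_shallow by (auto simp: CS_def lay_def link_av link_cs)
    qed
  qed
  moreover have "card (CS 1 (Suc n)) = 2 ^ (n div 2)" using card_CS[of 1 "Suc n"] by simp
  ultimately show ?thesis using part2 by simp
qed


end
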